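(* For every integer $n\ge 1$, $$\Phi^{(2)}[a; bq^n, b'; c, c'; x, y] = \Phi^{(2)}[a; b, b'; c, c'; x, y] + \frac{bx(1-a)}{1-c} \sum_{k=1}^n q^{k-1} \Phi^{(2)}[aq; bq^k, b'; cq, c'; x, y]$$ and $$\Phi^{(2)}[a; bq^{-n}, b'; c, c'; x, y] = \Phi^{(2)}[a; b, b'; c, c'; x, y] - \frac{bx(1-a)}{1-c} \sum_{k=1}^n q^{-k} \Phi^{(2)}[aq; bq^{1-k}, b'; cq, c'; x, y].$$
   Context: Let $q$ be a complex number with $0<|q|<1$. For complex $z$ and integer $m\ge 0$, $(z;q)_m=\prod_{j=0}^{m-1}(1-zq^j)$, with $(z;q)_0=1$. The $q$-Appell function $\Phi^{(2)}$ is $$\Phi^{(2)}[a; b, b'; c, c'; x, y] = \sum_{m, n \geq 0} \frac{(a; q)_{m+n} (b; q)_m (b'; q)_n}{(q; q)_m (q; q)_n (c; q)_m (c'; q)_n} x^m y^n.$$ Identities are understood as identities of power series in $x,y$ (formal, or convergent for small $|x|,|y|$), with complex parameters chosen so that no denominator occurring vanishes. *)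

theory Defs
  imports Complex_Main "HOL-Computational_Algebra.Formal_Power_Series"
begin

definition qpoch :: "complex \<Rightarrow> complex \<Rightarrow> nat \<Rightarrow> complex" where
  "qpoch z q m = (\<Prod>j<m. 1 - z * q ^ j)"

text \<open>The q-Appell function Phi^(2) as a formal power series in two variables,
  realised in C[[y]][[x]]: the outer variable is x (fps_X), the inner one is y.\<close>
definition qAppell2 ::
  "complex \<Rightarrow> complex \<Rightarrow> complex \<Rightarrow> complex \<Rightarrow> complex \<Rightarrow> complex \<Rightarrow> complex fps fps" where
  "qAppell2 q a b b' c c' =
     Abs_fps (\<lambda>m. Abs_fps (\<lambda>n.
        qpoch a q (m + n) * qpoch b q m * qpoch b' q n /
        (qpoch q q m * qpoch q q n * qpoch c q m * qpoch c' q n)))"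

abbreviation fpsx :: "complex fps fps" where "fpsx \<equiv> fps_X"
abbreviation fpsy :: "complex fps fps" where "fpsy \<equiv> fps_const fps_X"
abbreviation cst :: "complex \<Rightarrow> complex fps fps" where "cst z \<equiv> fps_const (fps_const z)"

end

theory Submission imports Defs begin

lemma qpoch_Suc_shift: "qpoch z q (Suc m) = (1 - z) * qpoch (z*q) q m"
  unfolding qpoch_def by (subst prod.lessThan_Suc_shift) (simp add: mult.assoc)

lemma qpoch_Suc: "qpoch z q (Suc m) = qpoch z q m * (1 - z * q ^ m)"
  unfolding qpoch_def by simp

lemma qpoch_q_nz: assumes "norm q < 1" shows "qpoch q q m \<noteq> 0"
proof -
  have "q * q ^ j \<noteq> 1" for j
  proof
    assume "q * q ^ j = 1"
    hence "norm (q ^ Suc j) = 1" by simp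
    moreover have "norm q ^ Suc j < 1" using assms
      by (simp add: power_less_one_iff del: power_Suc)
    hence "norm (q ^ Suc j) < 1" by (simp only: norm_power)
    ultimately show False by simp
  qed
  thus ?thesis unfolding qpoch_def by (simp add: prod_zero_iff)
qed

lemma cst_x_nth: "fps_nth (cst z * fpsx * F) m = (if m = 0 then 0 else fps_const z * fps_nth F (m - 1))"
proof -
  have "cst z * fpsx * F = fpsx * (cst z * F)" by (simp add: algebra_simps)
  show ?thesis unfolding \<open>cst z * fpsx * F = fpsx * (cst z * F)\<close> fps_X_mult_nth
    by simp
qed

lemma nth_qAppell2: "fps_nth (fps_nth (qAppell2 q a b b' c c') m) n =
  qpoch a q (m + n) * qpoch b q m * qpoch b' q n /
        (qpoch q q m * qpoch q q n * qpoch c q m * qpoch c' q n)"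
  by (simp add: qAppell2_def)

lemma alg:
  fixes a b c A Bq B' Q Qn Cq Cn qk :: complex
  assumes "Q \<noteq> 0" "Qn \<noteq> 0" "1 - qk \<noteq> 0" "1 - c \<noteq> 0" "Cq \<noteq> 0" "Cn \<noteq> 0"
  shows "(1-a)*A*(Bq*(1-b*qk))*B'/((Q*(1-qk))*Qn*((1-c)*Cq)*Cn) =
     (1-a)*A*((1-b)*Bq)*B'/((Q*(1-qk))*Qn*((1-c)*Cq)*Cn)
     + b*(1-a)/(1-c) * (A*Bq*B'/(Q*Qn*Cq*Cn))"
proof -
  let ?D = "(Q*(1-qk))*Qn*((1-c)*Cq)*Cn"
  have e: "(1-a)*A*(Bq*(1-b*qk))*B' = (1-a)*A*((1-b)*Bq)*B' + (b*(1-a)*(A*Bq*B'))*(1-qk)"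
    by (simp add: algebra_simps)
  have "(b*(1-a)*(A*Bq*B'))*(1-qk) / ?D = b*(1-a)/(1-c) * (A*Bq*B'/(Q*Qn*Cq*Cn))"
  proof -
    have D: "?D = (1-qk) * ((1-c)*(Q*Qn*Cq*Cn))" by (simp add: algebra_simps)
    have "(b*(1-a)*(A*Bq*B'))*(1-qk) / ?D = (b*(1-a)*(A*Bq*B')) / ((1-c)*(Q*Qn*Cq*Cn))"
      unfolding D using assms(3) by (simp add: mult.commute)
    also have "\<dots> = b*(1-a)/(1-c) * (A*Bq*B'/(Q*Qn*Cq*Cn))" by simp
    finally show ?thesis .
  qed
  thus ?thesis unfolding e add_divide_distrib by simp
qed

lemma step:
  assumes q: "norm q < 1" and c: "\<forall>m. qpoch c q m \<noteq> 0" and c': "\<forall>m. qpoch c' q m \<noteq> 0"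
  shows "qAppell2 q a (b*q) b' c c' = qAppell2 q a b b' c c'
     + cst (b*(1-a)/(1-c)) * fpsx * qAppell2 q (a*q) (b*q) b' (c*q) c'"
proof (rule fps_ext)
  fix m
  show "fps_nth (qAppell2 q a (b*q) b' c c') m = fps_nth (qAppell2 q a b b' c c'
     + cst (b*(1-a)/(1-c)) * fpsx * qAppell2 q (a*q) (b*q) b' (c*q) c') m"
  proof (cases m)
    case 0
    then show ?thesis by (simp add: qAppell2_def qpoch_def cst_x_nth)
  next
    case (Suc k)
    show ?thesis
    proof (rule fps_ext)
      fix n
      have c1: "1 - c \<noteq> 0" using c[rule_format, of 1] by (simp add: qpoch_def)
      have cq: "qpoch (c*q) q k \<noteq> 0" using c[rule_format, of "Suc k"] by (simp add: qpoch_Suc_shift)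
      have qk: "qpoch q q k \<noteq> 0" "qpoch q q n \<noteq> 0" "qpoch q q (Suc k) \<noteq> 0" using qpoch_q_nz[OF q] by auto
      hence qk1: "1 - q * q ^ k \<noteq> 0" by (simp add: qpoch_Suc)
      have cn: "qpoch c' q n \<noteq> 0" using c' by auto
      have e1: "qpoch a q (Suc k + n) = (1-a) * qpoch (a*q) q (k+n)" by (simp add: qpoch_Suc_shift)
      have e2: "qpoch (b*q) q (Suc k) = qpoch (b*q) q k * (1 - b*(q*q^k))" by (simp add: qpoch_Suc mult.assoc)
      have e3: "qpoch b q (Suc k) = (1-b) * qpoch (b*q) q k" by (simp add: qpoch_Suc_shift)
      have e4: "qpoch q q (Suc k) = qpoch q q k * (1 - q*q^k)" by (simp add: qpoch_Suc)
      have e5: "qpoch c q (Suc k) = (1-c) * qpoch (c*q) q k" by (simp add: qpoch_Suc_shift)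
      show "fps_nth (fps_nth (qAppell2 q a (b*q) b' c c') m) n = fps_nth (fps_nth (qAppell2 q a b b' c c'
         + cst (b*(1-a)/(1-c)) * fpsx * qAppell2 q (a*q) (b*q) b' (c*q) c') m) n"
        apply (simp only: Suc cst_x_nth fps_add_nth fps_mult_left_const_nth nth_qAppell2 e1 e2 e3 e4 e5
          fps_nth_fps_const diff_Suc_1 if_False nat.distinct)
        apply (rule alg[OF qk(1,2) qk1 c1 cq cn])
        done
    qed
  qed
qed
lemma part1:
  assumes q: "norm q < 1" and c: "\<forall>m. qpoch c q m \<noteq> 0" and c': "\<forall>m. qpoch c' q m \<noteq> 0"
  shows "qAppell2 q a (b * q ^ n) b' c c' =
           qAppell2 q a b b' c c'
           + cst (b * (1 - a) / (1 - c)) * fpsx *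
             (\<Sum>k=1..n. cst (q ^ (k - 1)) * qAppell2 q (a * q) (b * q ^ k) b' (c * q) c')"
proof (induction n)
  case 0
  then show ?case by simp
next
  case (Suc n)
  have "qAppell2 q a (b * q ^ Suc n) b' c c' = qAppell2 q a ((b * q ^ n) * q) b' c c'"
    by (simp add: ac_simps)
  also have "\<dots> = qAppell2 q a (b * q ^ n) b' c c'
     + cst ((b * q ^ n)*(1-a)/(1-c)) * fpsx * qAppell2 q (a*q) ((b * q ^ n)*q) b' (c*q) c'"
    by (rule step[OF q c c'])
  also have "cst ((b * q ^ n)*(1-a)/(1-c)) = cst (b * (1 - a) / (1 - c)) * cst (q ^ n)"
  proof -
    have "(b * q ^ n)*(1-a)/(1-c) = b * (1 - a) / (1 - c) * q ^ n" by simp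
    thus ?thesis by (simp only: fps_const_mult)
  qed
  also have "(b * q ^ n)*q = b * q ^ Suc n" by (simp add: ac_simps)
  finally show ?case unfolding Suc.IH
    by (simp add: algebra_simps)
qed

lemma powi_mix: assumes "(q::complex) \<noteq> 0"
  shows "q powi (-int n) * q ^ m = q powi (int m - int n)"
  using power_int_add[of q "- int n" "int m"] assms by simp

theorem theorem8:
  fixes q a b b' c c' :: complex and n :: nat
  assumes "0 < norm q" "norm q < 1"
    and "\<forall>m. qpoch c q m \<noteq> 0" and "\<forall>m. qpoch c' q m \<noteq> 0"
    and "n \<ge> 1"
  shows "(qAppell2 q a (b * q ^ n) b' c c' =
           qAppell2 q a b b' c c'
           + cst (b * (1 - a) / (1 - c)) * fpsx *
             (\<Sum>k=1..n. cst (q ^ (k - 1)) * qAppell2 q (a * q) (b * q ^ k) b' (c * q) c')) \<and>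
         (qAppell2 q a (b * q powi (- int n)) b' c c' =
           qAppell2 q a b b' c c'
           - cst (b * (1 - a) / (1 - c)) * fpsx *
             (\<Sum>k=1..n. cst (q powi (- int k)) * qAppell2 q (a * q) (b * q powi (1 - int k)) b' (c * q) c'))"
proof
  show "qAppell2 q a (b * q ^ n) b' c c' =
           qAppell2 q a b b' c c'
           + cst (b * (1 - a) / (1 - c)) * fpsx *
             (\<Sum>k=1..n. cst (q ^ (k - 1)) * qAppell2 q (a * q) (b * q ^ k) b' (c * q) c')"
    by (rule part1[OF assms(2,3,4)])
next
  have q0: "q \<noteq> 0" using assms(1) by auto
  define bn where "bn = b * q powi (- int n)"
  define K where "K = b * (1 - a) / (1 - c)"
  let ?G = "\<lambda>z. qAppell2 q (a * q) z b' (c * q) c'"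
  have bnq: "bn * q ^ n = b" unfolding bn_def using q0
    by (simp add: mult.assoc powi_mix)
  have P: "qAppell2 q a b b' c c' = qAppell2 q a bn b' c c'
     + cst (bn * (1 - a) / (1 - c)) * fpsx * (\<Sum>k=1..n. cst (q ^ (k - 1)) * ?G (bn * q ^ k))"
    using part1[OF assms(2,3,4), of a bn n b'] unfolding bnq .
  have R: "(\<Sum>k=1..n. cst (q ^ (k - 1)) * ?G (bn * q ^ k))
        = (\<Sum>k=1..n. cst (q ^ (n + 1 - k - 1)) * ?G (bn * q ^ (n + 1 - k)))"
      by (rule sum.atLeastAtMost_rev)
  have T: "cst (bn * (1 - a) / (1 - c)) * (\<Sum>k=1..n. cst (q ^ (n + 1 - k - 1)) * ?G (bn * q ^ (n + 1 - k))) = 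
        (\<Sum>k=1..n. cst K * (cst (q powi (- int k)) * ?G (b * q powi (1 - int k))))"
      unfolding sum_distrib_left
  proof (rule sum.cong[OF refl])
      fix k assume k: "k \<in> {1..n}"
      have x1: "int (n + 1 - k) - int n = 1 - int k" using k by auto
      have x2: "int (n + 1 - k - 1) - int n = - int k" using k by auto
      have e1: "bn * q ^ (n + 1 - k) = b * q powi (1 - int k)"
        unfolding bn_def mult.assoc powi_mix[OF q0] x1 ..
      have e2': "bn * (1 - a) / (1 - c) * q ^ (n + 1 - k - 1) = K * (q powi (- int n) * q ^ (n + 1 - k - 1))"
        unfolding bn_def K_def by (simp add: algebra_simps)
      have e2: "bn * (1 - a) / (1 - c) * q ^ (n + 1 - k - 1) = K * q powi (- int k)"
        unfolding e2' powi_mix[OF q0] x2 ..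
      have "cst (bn * (1 - a) / (1 - c)) * (cst (q ^ (n + 1 - k - 1)) * ?G (bn * q ^ (n + 1 - k)))
        = cst (bn * (1 - a) / (1 - c) * q ^ (n + 1 - k - 1)) * ?G (bn * q ^ (n + 1 - k))"
        by (simp only: fps_const_mult[symmetric] mult.assoc[symmetric])
      also have "\<dots> = cst (K * q powi (- int k)) * ?G (b * q powi (1 - int k))"
        unfolding e1 e2 ..
      also have "\<dots> = cst K * (cst (q powi (- int k)) * ?G (b * q powi (1 - int k)))"
        by (simp only: fps_const_mult[symmetric] mult.assoc[symmetric])
      finally show "cst (bn * (1 - a) / (1 - c)) * (cst (q ^ (n + 1 - k - 1)) * ?G (bn * q ^ (n + 1 - k)))
        = cst K * (cst (q powi (- int k)) * ?G (b * q powi (1 - int k)))" .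
    qed
  have S: "cst (bn * (1 - a) / (1 - c)) * (\<Sum>k=1..n. cst (q ^ (k - 1)) * ?G (bn * q ^ k))
     = cst K * (\<Sum>k=1..n. cst (q powi (- int k)) * ?G (b * q powi (1 - int k)))"
    unfolding R T by (rule sum_distrib_left[symmetric])
  have "qAppell2 q a bn b' c c' = qAppell2 q a b b' c c'
     - fpsx * (cst (bn * (1 - a) / (1 - c)) * (\<Sum>k=1..n. cst (q ^ (k - 1)) * ?G (bn * q ^ k)))"
  proof -
    have "qAppell2 q a bn b' c c' = qAppell2 q a b b' c c'
     - cst (bn * (1 - a) / (1 - c)) * fpsx * (\<Sum>k=1..n. cst (q ^ (k - 1)) * ?G (bn * q ^ k))"
      using P by (simp only: eq_diff_eq)
    thus ?thesis by (simp only: ac_simps)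
  qed
  also have "\<dots> = qAppell2 q a b b' c c' - cst K * fpsx *
       (\<Sum>k=1..n. cst (q powi (- int k)) * ?G (b * q powi (1 - int k)))"
    unfolding S by (simp only: ac_simps)
  finally show "qAppell2 q a (b * q powi (- int n)) b' c c' =
           qAppell2 q a b b' c c'
           - cst (b * (1 - a) / (1 - c)) * fpsx *
             (\<Sum>k=1..n. cst (q powi (- int k)) * qAppell2 q (a * q) (b * q powi (1 - int k)) b' (c * q) c')"
    unfolding bn_def K_def .
qed

end
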